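(* Let $G$ be a neighborhood unit square graph with $V(G)\ne\emptyset$. Let $X$ be the set of vertices $v\in V(G)$ for which there exist $\ell\ge4$ and distinct vertices $w_1,\dots,w_\ell\in V(G)\setminus\{v\}$ such that $vw_i\notin E(G)$ for all $i\in[\ell]$ and $G[\{w_1,\dots,w_\ell\}]\cong C_\ell$. Then $X\ne V(G)$.
   Context: A neighborhood unit square graph is a graph $G$ admitting a map $f\colon V(G)\to[-1,1]^2$ such that for distinct $v,w$, $vw\in E(G)$ iff $\|f(v)-f(w)\|_\infty\le1$. $C_\ell$ is the cycle of length $\ell$. *)

theory Defs
  imports "HOL-Analysis.Analysis"
begin

definition simple_graph :: "'a set \<Rightarrow> ('a \<Rightarrow> 'a \<Rightarrow> bool) \<Rightarrow> bool" where
  "simple_graph V E \<longleftrightarrow> finite V \<and> (\<forall>v w. E v w \<longrightarrow> v \<in> V \<and> w \<in> V)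
     \<and> (\<forall>v w. E v w \<longrightarrow> E w v) \<and> (\<forall>v. \<not> E v v)"

definition nus_graph :: "'a set \<Rightarrow> ('a \<Rightarrow> 'a \<Rightarrow> bool) \<Rightarrow> bool" where
  "nus_graph V E \<longleftrightarrow> simple_graph V E \<and>
     (\<exists>f :: 'a \<Rightarrow> real \<times> real.
        (\<forall>v\<in>V. fst (f v) \<in> {-1..1} \<and> snd (f v) \<in> {-1..1}) \<and>
        (\<forall>v\<in>V. \<forall>w\<in>V. v \<noteq> w \<longrightarrow>
           (E v w \<longleftrightarrow> max \<bar>fst (f v) - fst (f w)\<bar> \<bar>snd (f v) - snd (f w)\<bar> \<le> 1)))"

definition induced_cycle :: "('a \<Rightarrow> 'a \<Rightarrow> bool) \<Rightarrow> 'a set \<Rightarrow> nat \<Rightarrow> bool" where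
  "induced_cycle E W l \<longleftrightarrow>
     (\<exists>g. bij_betw g {..<l} W \<and>
        (\<forall>i<l. \<forall>j<l. E (g i) (g j) \<longleftrightarrow> (i \<noteq> j \<and> (j = (i + 1) mod l \<or> i = (j + 1) mod l))))"

end

theory Submission
  imports Defs
begin

lemma cycle_chord:
  fixes E :: "'a \<Rightarrow> 'a \<Rightarrow> bool"
  assumes "4 \<le> (l::nat)" "i < l"
    and ind: "\<forall>i<l. \<forall>j<l. E (g i) (g j) \<longleftrightarrow> (i \<noteq> j \<and> (j = (i + 1) mod l \<or> i = (j + 1) mod l))"
  shows "\<exists>p<l. \<exists>q<l. p \<noteq> q \<and> E (g i) (g p) \<and> E (g i) (g q) \<and> \<not> E (g p) (g q)"
proof -
  define p where "p = (if i + 1 < l then i + 1 else 0)"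
  define q where "q = (if i = 0 then l - 1 else i - 1)"
  have pl: "p < l" "q < l" using assms unfolding p_def q_def by auto
  have pm: "p = (i + 1) mod l"
  proof (cases "i + 1 < l")
    case False then have "i + 1 = l" using assms by linarith
    then show ?thesis unfolding p_def by simp
  qed (simp add: p_def)
  have qm: "i = (q + 1) mod l"
  proof (cases "i = 0")
    case True then show ?thesis unfolding q_def using assms by simp
  next
    case False then show ?thesis unfolding q_def using assms by simp
  qed
  have p1: "(p + 1) mod l = (if i + 2 < l then i + 2 else if i + 2 = l then 0 else 1)"
    using assms unfolding p_def by auto
  have q1: "(q + 1) mod l = i" using qm by simp
  have "p \<noteq> q" "i \<noteq> p" "i \<noteq> q" "q \<noteq> (p + 1) mod l" "p \<noteq> (q + 1) mod l"
    using assms p1 q1 pm unfolding p_def q_def by (auto split: if_splits)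
  then show ?thesis using pl pm qm ind assms(2) by metis
qed

lemma ex_max_idx:
  fixes h :: "nat \<Rightarrow> real"
  assumes "0 < l"
  obtains i where "i < l" "\<forall>j<l. h j \<le> h i"
proof -
  have fin: "finite (h ` {..<l})" and ne: "h ` {..<l} \<noteq> {}" using assms by auto
  have "Max (h ` {..<l}) \<in> h ` {..<l}" using Max_in[OF fin ne] .
  then obtain i where "i < l" "h i = Max (h ` {..<l})" by auto
  moreover have "\<forall>j<l. h j \<le> Max (h ` {..<l})" using fin by auto
  ultimately show ?thesis using that by auto
qed

lemma key:
  fixes f :: "'a \<Rightarrow> real \<times> real" and E :: "'a \<Rightarrow> 'a \<Rightarrow> bool" and l :: nat
  assumes rng: "\<forall>u\<in>V. fst (f u) \<in> {-1..1} \<and> snd (f u) \<in> {-1..1}"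
    and adj: "\<forall>u\<in>V. \<forall>w\<in>V. u \<noteq> w \<longrightarrow>
           (E u w \<longleftrightarrow> max \<bar>fst (f u) - fst (f w)\<bar> \<bar>snd (f u) - snd (f w)\<bar> \<le> 1)"
    and vV: "v \<in> V" and a0: "0 \<le> fst (f v)" and amin: "\<forall>u\<in>V. fst (f v) \<le> \<bar>fst (f u)\<bar>"
    and l4: "4 \<le> l" and gW: "\<forall>i<l. g i \<in> V \<and> g i \<noteq> v \<and> \<not> E v (g i)"
    and ginj: "inj_on g {..<l}"
    and ind: "\<forall>i<l. \<forall>j<l. E (g i) (g j) \<longleftrightarrow> (i \<noteq> j \<and> (j = (i + 1) mod l \<or> i = (j + 1) mod l))"
  shows False
proof -
  define a where "a = fst (f v)"
  define b where "b = snd (f v)"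
  define X where "X i = fst (f (g i))" for i
  define Y where "Y i = snd (f (g i))" for i
  have ab: "-1 \<le> a" "a \<le> 1" "-1 \<le> b" "b \<le> 1" using rng vV unfolding a_def b_def by auto
  have XY: "\<And>i. i < l \<Longrightarrow> -1 \<le> X i \<and> X i \<le> 1 \<and> -1 \<le> Y i \<and> Y i \<le> 1"
    using rng gW unfolding X_def Y_def by fastforce
  have am: "\<And>i. i < l \<Longrightarrow> a \<le> \<bar>X i\<bar>" using amin gW unfolding X_def a_def by auto
  have nonadj: "\<And>i. i < l \<Longrightarrow> \<bar>X i - a\<bar> > 1 \<or> \<bar>Y i - b\<bar> > 1"
  proof -
    fix i assume i: "i < l"
    have "\<not> E v (g i)" "g i \<in> V" "v \<noteq> g i" using gW i by auto
    then have "\<not> max \<bar>a - X i\<bar> \<bar>b - Y i\<bar> \<le> 1"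
      using adj vV unfolding a_def b_def X_def Y_def by blast
    then show "\<bar>X i - a\<bar> > 1 \<or> \<bar>Y i - b\<bar> > 1" by (auto simp: abs_minus_commute)
  qed
  have adjD: "\<And>i j. i < l \<Longrightarrow> j < l \<Longrightarrow> E (g i) (g j) \<Longrightarrow> \<bar>X i - X j\<bar> \<le> 1 \<and> \<bar>Y i - Y j\<bar> \<le> 1"
  proof -
    fix i j assume ij: "i < l" "j < l" "E (g i) (g j)"
    then have "i \<noteq> j" using ind by blast
    then have "g i \<noteq> g j" using ginj ij by (auto dest: inj_onD)
    then show "\<bar>X i - X j\<bar> \<le> 1 \<and> \<bar>Y i - Y j\<bar> \<le> 1"
      using adj gW ij unfolding X_def Y_def by auto
  qed
  have nadjD: "\<And>i j. i < l \<Longrightarrow> j < l \<Longrightarrow> i \<noteq> j \<Longrightarrow> \<not> E (g i) (g j) \<Longrightarrow> \<bar>X i - X j\<bar> > 1 \<or> \<bar>Y i - Y j\<bar> > 1"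
  proof -
    fix i j assume ij: "i < l" "j < l" "i \<noteq> j" "\<not> E (g i) (g j)"
    then have "g i \<noteq> g j" using ginj by (auto dest: inj_onD)
    then show "\<bar>X i - X j\<bar> > 1 \<or> \<bar>Y i - Y j\<bar> > 1"
      using adj gW ij unfolding X_def Y_def by force
  qed
  have chord: "\<And>i. i < l \<Longrightarrow> \<exists>p<l. \<exists>q<l. p \<noteq> q \<and> E (g i) (g p) \<and> E (g i) (g q) \<and> \<not> E (g p) (g q)"
    using cycle_chord[of l _ E g] l4 ind by blast
  have l0: "0 < l" using l4 by simp
  obtain i where i: "i < l" "\<forall>j<l. X j \<le> X i" using ex_max_idx[OF l0] by metis
  show False
  proof (cases "X i \<le> -a")
    case True
    obtain k where k: "k < l" "\<forall>j<l. Y j \<le> Y k" using ex_max_idx[OF l0] by metis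
    obtain p q where pq: "p < l" "q < l" "p \<noteq> q" "E (g k) (g p)" "E (g k) (g q)" "\<not> E (g p) (g q)"
      using chord[OF k(1)] by blast
    have 1: "\<bar>Y k - Y p\<bar> \<le> 1" "\<bar>Y k - Y q\<bar> \<le> 1" using adjD[OF k(1) pq(1) pq(4)] adjD[OF k(1) pq(2) pq(5)] by auto
    have 2: "Y p \<le> Y k" "Y q \<le> Y k" "X p \<le> X i" "X q \<le> X i" using k i pq by auto
    have 3: "-1 \<le> X p" "-1 \<le> X q" using XY pq by auto
    have "\<bar>X p - X q\<bar> > 1 \<or> \<bar>Y p - Y q\<bar> > 1" using nadjD[OF pq(1) pq(2) pq(3) pq(6)] by auto
    then show False using 1 2 3 True a0 unfolding a_def by (auto simp: abs_if split: if_splits)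
  next
    case False
    then have Xi: "a \<le> X i" using am[OF i(1)] a0 unfolding a_def by (auto simp: abs_if split: if_splits)
    obtain p q where pq: "p < l" "q < l" "p \<noteq> q" "E (g i) (g p)" "E (g i) (g q)" "\<not> E (g p) (g q)"
      using chord[OF i(1)] by blast
    have 1: "\<bar>X i - X p\<bar> \<le> 1" "\<bar>X i - X q\<bar> \<le> 1" using adjD[OF i(1) pq(1) pq(4)] adjD[OF i(1) pq(2) pq(5)] by auto
    have 2: "X p \<le> X i" "X q \<le> X i" using i pq by auto
    have 3: "X i \<le> 1" using XY i by auto
    have "\<bar>X p - a\<bar> \<le> 1" "\<bar>X q - a\<bar> \<le> 1" using 1 2 3 Xi a0 unfolding a_def by auto
    then have 4: "\<bar>Y p - b\<bar> > 1" "\<bar>Y q - b\<bar> > 1" using nonadj pq by force+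
    have 5: "-1 \<le> Y p" "Y p \<le> 1" "-1 \<le> Y q" "Y q \<le> 1" using XY pq by auto
    have "\<bar>X p - X q\<bar> > 1 \<or> \<bar>Y p - Y q\<bar> > 1" using nadjD[OF pq(1) pq(2) pq(3) pq(6)] by auto
    then show False using 1 2 4 5 ab by (auto simp: abs_if split: if_splits)
  qed
qed

theorem mainTheorem18:
  fixes V :: "'a set" and E :: "'a \<Rightarrow> 'a \<Rightarrow> bool"
  assumes "nus_graph V E" and "V \<noteq> {}"
  defines "X \<equiv> {v \<in> V. \<exists>l \<ge> 4. \<exists>w :: nat \<Rightarrow> 'a.
              inj_on w {1..l} \<and> w ` {1..l} \<subseteq> V - {v} \<and>
              (\<forall>i\<in>{1..l}. \<not> E v (w i)) \<and> induced_cycle E (w ` {1..l}) l}"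
  shows "X \<noteq> V"
proof
  assume XV: "X = V"
  have fin: "finite V" using assms(1) unfolding nus_graph_def simple_graph_def by simp
  from assms(1) obtain f :: "'a \<Rightarrow> real \<times> real" where
    rng: "\<forall>u\<in>V. fst (f u) \<in> {-1..1} \<and> snd (f u) \<in> {-1..1}" and
    adj: "\<forall>u\<in>V. \<forall>w\<in>V. u \<noteq> w \<longrightarrow>
           (E u w \<longleftrightarrow> max \<bar>fst (f u) - fst (f w)\<bar> \<bar>snd (f u) - snd (f w)\<bar> \<le> 1)"
    unfolding nus_graph_def by (elim conjE exE) (rule that)
  define h where "h u = \<bar>fst (f u)\<bar>" for u
  have fi: "finite (h ` V)" and ne: "h ` V \<noteq> {}" using fin assms(2) by auto
  obtain v where vV: "v \<in> V" and hv: "h v = Min (h ` V)" using Min_in[OF fi ne] by auto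
  have vmin: "\<forall>u\<in>V. \<bar>fst (f v)\<bar> \<le> \<bar>fst (f u)\<bar>" using hv fi unfolding h_def by auto
  have "v \<in> X" using XV vV by simp
  then obtain l w where l4: "4 \<le> l" and wV: "w ` {1..l} \<subseteq> V - {v}"
    and nE: "\<forall>i\<in>{1..l}. \<not> E v (w i)" and ic: "induced_cycle E (w ` {1..l}) l"
    unfolding X_def by blast
  from ic obtain g where bij: "bij_betw g {..<l} (w ` {1..l})" and
    ind: "\<forall>i<l. \<forall>j<l. E (g i) (g j) \<longleftrightarrow> (i \<noteq> j \<and> (j = (i + 1) mod l \<or> i = (j + 1) mod l))"
    unfolding induced_cycle_def by blast
  have ginj: "inj_on g {..<l}" using bij bij_betw_def by blast
  have gW: "\<forall>i<l. g i \<in> V \<and> g i \<noteq> v \<and> \<not> E v (g i)"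
  proof (intro allI impI)
    fix i assume "i < l"
    then have "g i \<in> w ` {1..l}" using bij bij_betw_apply by fastforce
    then show "g i \<in> V \<and> g i \<noteq> v \<and> \<not> E v (g i)" using wV nE by auto
  qed
  show False
  proof (cases "0 \<le> fst (f v)")
    case True
    show False
      by (rule key[of V f E v l g]) (use rng adj vV True vmin l4 gW ginj ind in auto)
  next
    case False
    define f' where "f' u = (- fst (f u), snd (f u))" for u
    have rng': "\<forall>u\<in>V. fst (f' u) \<in> {-1..1} \<and> snd (f' u) \<in> {-1..1}"
      using rng unfolding f'_def by auto
    have adj': "\<forall>u\<in>V. \<forall>w\<in>V. u \<noteq> w \<longrightarrow>
           (E u w \<longleftrightarrow> max \<bar>fst (f' u) - fst (f' w)\<bar> \<bar>snd (f' u) - snd (f' w)\<bar> \<le> 1)"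
    proof (intro ballI impI)
      fix u w assume "u \<in> V" "w \<in> V" "u \<noteq> w"
      moreover have "\<bar>fst (f' u) - fst (f' w)\<bar> = \<bar>fst (f u) - fst (f w)\<bar>"
        unfolding f'_def by (simp add: abs_minus_commute)
      ultimately show "E u w \<longleftrightarrow> max \<bar>fst (f' u) - fst (f' w)\<bar> \<bar>snd (f' u) - snd (f' w)\<bar> \<le> 1"
        using adj unfolding f'_def by auto
    qed
    have a0': "0 \<le> fst (f' v)" using False unfolding f'_def by simp
    have amin': "\<forall>u\<in>V. fst (f' v) \<le> \<bar>fst (f' u)\<bar>" using vmin False unfolding f'_def by auto
    show False
      by (rule key[of V f' E v l g]) (use rng' adj' vV a0' amin' l4 gW ginj ind in auto)
  qed
qed

end
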